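(* Consider the HYZ12 protocol with $k$ sites and accuracy parameter $\varepsilon$ with $\varepsilon\sqrt{k}<1$, run on the event stream generated by the round-robin adversary (both described in the context). Fix the transcript (all states of the adversary, sites and server) up to the initiation of a round at event count $n_0\ge 4\sqrt{k}/\varepsilon$, and consider the execution from event $n_0+1$ onward. Let $R$ be the number of distinct sites that send a Report message to the server during the next $n_0$ events. Then \[ \Pr\!\left[R>\tfrac{k}{8}\right]\;\ge\;1-\exp\!\left(-\tfrac{\sqrt{k}}{32\varepsilon}\right). \]
   Context: Distributed counting: a server and $k$ sites; events arrive one at a time, each at some site; $n_i$ is the number of events at site $i$ so far and $n=\sum_in_i$ is the event count. ${\rm Geom}(q)$ is the geometric distribution on $\{1,2,\dots\}$. Doubling subprotocol: each site, after incrementing $n_i$, sends $(i,n_i)$ to the server whenever $n_i$ is a power of $2$. The server keeps $n'_i$ (initially $0$), $n'=\sum_in'_i$, threshold $\tau=1$; upon receiving $(i,n_i)$ it sets $n'\gets n'+n_i-n'_i$, $n'_i\gets n_i$, and if $n'\ge2\tau$ triggers BoundaryReached$(n')$ and sets $\tau\gets n'$. HYZ12 protocol: each site keeps a transmission probability $p$ (initially $1$, updated by server broadcasts) and $n_i$; on each event at site $i$, $n_i\gets n_i+1$ and independently with probability $p$ the site sends Report$(i,n_i)$. The server keeps $\bar n_i=\hat n_i=0$ for each $i$ and $p=1$. On Report$(i,\bar n)$: $\bar n_i\gets\bar n$, $\hat n_i\gets\bar n_i-1+1/p$, publish $\hat n=\sum_j\hat n_j$. On BoundaryReached$(n')$ (reports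 processed first): a new round starts; $p_{\rm old}\gets p$, $p\gets2^{\min\{0,\lfloor\log_2(\sqrt k/(\varepsilon n'))\rfloor\}}$; if $p<1$, for each $i$ sample independently $Z_i=B\cdot G$, $B\sim{\rm Bernoulli}(1-p/p_{\rm old})$, $G\sim{\rm Geom}(p)$, set $\bar n_i\gets\max\{0,\bar n_i-Z_i\}$, $\hat n_i\gets0$ if $\bar n_i=0$ else $\bar n_i-1+1/p$, and broadcast $p$. Round-robin adversary: start with current site $i=1$ and record the current published estimate $\hat n_{\rm last}$. Repeatedly inject events at the current site $i$ until the published estimate differs from $\hat n_{\rm last}$; then set $\hat n_{\rm last}$ to the new estimate and move to site $1+(i\bmod k)$. *)

theory Defs
  imports "HOL-Probability.Probability"
begin

text \<open>Sites are indexed 0..k-1 (site 0 plays the role of site 1 in the paper).\<close>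

record st =
  nloc :: "nat \<Rightarrow> nat"
  ntot :: nat
  srv_n :: "nat \<Rightarrow> nat"       \<comment> \<open>doubling subprotocol: server copies n'_i\<close>
  srv_sum :: nat
  tau :: nat
  nbar :: "nat \<Rightarrow> nat"
  nhat :: "nat \<Rightarrow> real"
  pp :: real                   \<comment> \<open>transmission probability p (server and sites)\<close>
  pub :: real
  adv_site :: nat
  adv_last :: real
  round_start :: bool          \<comment> \<open>BoundaryReached (new round) happened at the last event\<close>

definition init_st :: st where
  "init_st = \<lparr> nloc = (\<lambda>_. 0), ntot = 0, srv_n = (\<lambda>_. 0), srv_sum = 0, tau = 1,
     nbar = (\<lambda>_. 0), nhat = (\<lambda>_. 0), pp = 1, pub = 0, adv_site = 0, adv_last = 0,
     round_start = False \<rparr>"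

definition is_pow2 :: "nat \<Rightarrow> bool" where
  "is_pow2 m \<longleftrightarrow> (\<exists>j. m = 2 ^ j)"

definition newp :: "nat \<Rightarrow> real \<Rightarrow> nat \<Rightarrow> real" where
  "newp k eps n' = 2 powr real_of_int (min 0 \<lfloor>log 2 (sqrt (real k) / (eps * real n'))\<rfloor>)"

definition geom1 :: "real \<Rightarrow> nat pmf" where
  "geom1 p = map_pmf Suc (geometric_pmf p)"

definition Zdist :: "real \<Rightarrow> real \<Rightarrow> nat pmf" where
  "Zdist pold p = bind_pmf (bernoulli_pmf (1 - p / pold)) (\<lambda>b.
      map_pmf (\<lambda>g. (if b then 1 else 0) * g) (geom1 p))"

definition site_event :: "st \<Rightarrow> st" where
  "site_event s = (let i = adv_site s in
     s\<lparr> nloc := (nloc s)(i := nloc s i + 1), ntot := ntot s + 1, round_start := False \<rparr>)"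

definition report_recv :: "nat \<Rightarrow> st \<Rightarrow> nat \<Rightarrow> st" where
  "report_recv k s i = (let nb = (nbar s)(i := nloc s i);
       nh = (nhat s)(i := real (nb i) - 1 + 1 / pp s) in
     s\<lparr> nbar := nb, nhat := nh, pub := (\<Sum>j<k. nh j) \<rparr>)"

text \<open>Doubling subprotocol after the event at site i; returns whether BoundaryReached fired.\<close>
definition doubling :: "st \<Rightarrow> nat \<Rightarrow> st \<times> bool" where
  "doubling s i = (if is_pow2 (nloc s i) then
      (let n' = srv_sum s + nloc s i - srv_n s i;
           s' = s\<lparr> srv_sum := n', srv_n := (srv_n s)(i := nloc s i) \<rparr> in
       if real n' \<ge> 2 * real (tau s) then (s'\<lparr> tau := n' \<rparr>, True) else (s', False))
    else (s, False))"

definition boundary :: "nat \<Rightarrow> real \<Rightarrow> st \<Rightarrow> st pmf" where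
  "boundary k eps s = (let pold = pp s; p = newp k eps (srv_sum s); s0 = s\<lparr> pp := p, round_start := True \<rparr> in
     if p < 1 then
       map_pmf (\<lambda>Z. let nb = (\<lambda>j. nbar s j - Z j);
                         nh = (\<lambda>j. if nb j = 0 then 0 else real (nb j) - 1 + 1 / p) in
                     s0\<lparr> nbar := nb, nhat := nh \<rparr>)
         (Pi_pmf {..<k} 0 (\<lambda>_. Zdist pold p))
     else return_pmf s0)"

definition adv_upd :: "nat \<Rightarrow> st \<Rightarrow> st" where
  "adv_upd k s = (if pub s \<noteq> adv_last s
      then s\<lparr> adv_last := pub s, adv_site := (adv_site s + 1) mod k \<rparr> else s)"

text \<open>One event; the boolean says whether the site sent a Report.\<close>
definition step :: "nat \<Rightarrow> real \<Rightarrow> st \<Rightarrow> (bool \<times> st) pmf" where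
  "step k eps s = bind_pmf (bernoulli_pmf (pp s)) (\<lambda>c.
     (let i = adv_site s;
          s1 = site_event s;
          s2 = (if c then report_recv k s1 i else s1);
          (s3, bd) = doubling s2 i in
      map_pmf (\<lambda>s4. (c, adv_upd k s4)) (if bd then boundary k eps s3 else return_pmf s3)))"

text \<open>Execution of m events: set of sites that sent a Report, and final state.\<close>
fun exec :: "nat \<Rightarrow> real \<Rightarrow> nat \<Rightarrow> st \<Rightarrow> (nat set \<times> st) pmf" where
  "exec k eps 0 s = return_pmf ({}, s)"
| "exec k eps (Suc m) s = bind_pmf (step k eps s) (\<lambda>(c, s1).
      map_pmf (\<lambda>(R, s2). ((if c then {adv_site s} else {}) \<union> R, s2)) (exec k eps m s1))"

definition run :: "nat \<Rightarrow> real \<Rightarrow> nat \<Rightarrow> st \<Rightarrow> st pmf" where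
  "run k eps m s = map_pmf snd (exec k eps m s)"

end

theory Submission
  imports Defs
begin


definition s2_of :: "nat \<Rightarrow> st \<Rightarrow> bool \<Rightarrow> st" where
  "s2_of k s c = (if c then report_recv k (site_event s) (adv_site s) else site_event s)"

definition mid :: "nat \<Rightarrow> real \<Rightarrow> st \<Rightarrow> bool \<Rightarrow> st pmf" where
  "mid k eps s c = (if snd (doubling (s2_of k s c) (adv_site s))
      then boundary k eps (fst (doubling (s2_of k s c) (adv_site s)))
      else return_pmf (fst (doubling (s2_of k s c) (adv_site s))))"

lemma step_alt: "step k eps s = bind_pmf (bernoulli_pmf (pp s))
   (\<lambda>c. map_pmf (\<lambda>s4. (c, adv_upd k s4)) (mid k eps s c))"
  unfolding step_def mid_def s2_of_def Let_def
  by (intro bind_pmf_cong refl) (auto split: prod.splits)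

lemma step_support:
  assumes "(c, s') \<in> set_pmf (step k eps s)"
  obtains s4 where "s4 \<in> set_pmf (mid k eps s c)" "s' = adv_upd k s4"
  using assms unfolding step_alt by auto


lemma sum_upd_nat: "i < (k::nat) \<Longrightarrow> (\<Sum>j<k. (f(i := v)) j) + f i = (\<Sum>j<k. f j) + (v::nat)"
proof -
  assume "i < k"
  then have "(\<Sum>j<k. (f(i := v)) j) = v + (\<Sum>j\<in>{..<k} - {i}. f j)"
    by (subst sum.remove[of "{..<k}" i]) auto
  moreover have "(\<Sum>j<k. f j) = f i + (\<Sum>j\<in>{..<k} - {i}. f j)"
    using \<open>i < k\<close> by (subst sum.remove[of "{..<k}" i]) auto
  ultimately show ?thesis by simp
qed

lemma sum_upd_real: "i < (k::nat) \<Longrightarrow> (\<Sum>j<k. (f(i := v)) j) = (\<Sum>j<k. f j) - f i + (v::real)"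
proof -
  assume "i < k"
  then have "(\<Sum>j<k. (f(i := v)) j) = v + (\<Sum>j\<in>{..<k} - {i}. f j)"
    by (subst sum.remove[of "{..<k}" i]) auto
  moreover have "(\<Sum>j<k. f j) = f i + (\<Sum>j\<in>{..<k} - {i}. f j)"
    using \<open>i < k\<close> by (subst sum.remove[of "{..<k}" i]) auto
  ultimately show ?thesis by simp
qed

lemma s2_fields:
  "nloc (s2_of k s c) = (nloc s)(adv_site s := nloc s (adv_site s) + 1)"
  "ntot (s2_of k s c) = ntot s + 1"
  "srv_n (s2_of k s c) = srv_n s" "srv_sum (s2_of k s c) = srv_sum s"
  "tau (s2_of k s c) = tau s" "pp (s2_of k s c) = pp s"
  "round_start (s2_of k s c) = False" "adv_site (s2_of k s c) = adv_site s"
  "adv_last (s2_of k s c) = adv_last s"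
  "nbar (s2_of k s c) = (if c then (nbar s)(adv_site s := nloc s (adv_site s) + 1) else nbar s)"
  "nhat (s2_of k s c) = (if c then (nhat s)(adv_site s := real (nloc s (adv_site s)) + 1 / pp s) else nhat s)"
  "pub (s2_of k s c) = (if c then (\<Sum>j<k. ((nhat s)(adv_site s := real (nloc s (adv_site s)) + 1 / pp s)) j) else pub s)"
  by (auto simp: s2_of_def report_recv_def site_event_def Let_def fun_eq_iff intro!: sum.cong)

lemma doubling_fields:
  assumes "doubling s i = (s3, bd)"
  shows "nloc s3 = nloc s" "ntot s3 = ntot s" "nbar s3 = nbar s" "nhat s3 = nhat s"
    "pp s3 = pp s" "pub s3 = pub s" "adv_site s3 = adv_site s" "adv_last s3 = adv_last s"
    "round_start s3 = round_start s"
    "if is_pow2 (nloc s i) then srv_n s3 = (srv_n s)(i := nloc s i) \<and>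
        srv_sum s3 = srv_sum s + nloc s i - srv_n s i \<and> (bd \<longleftrightarrow> 2 * tau s \<le> srv_sum s3)
        \<and> tau s3 = (if bd then srv_sum s3 else tau s)
     else srv_n s3 = srv_n s \<and> srv_sum s3 = srv_sum s \<and> \<not> bd \<and> tau s3 = tau s"
  using assms by (auto simp: doubling_def Let_def split: if_splits)

definition Cst :: "st \<Rightarrow> bool" where
  "Cst s \<longleftrightarrow> (\<forall>j. nhat s j = (if nbar s j = 0 then 0 else real (nbar s j) - 1 + 1 / pp s))"

lemma boundary_fields:
  assumes "s4 \<in> set_pmf (boundary k eps s3)"
  shows "nloc s4 = nloc s3" "ntot s4 = ntot s3" "srv_n s4 = srv_n s3" "srv_sum s4 = srv_sum s3"
    "tau s4 = tau s3" "pub s4 = pub s3" "adv_site s4 = adv_site s3" "adv_last s4 = adv_last s3"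
    "pp s4 = newp k eps (srv_sum s3)" "round_start s4"
    "(\<not> pp s4 < 1 \<and> nbar s4 = nbar s3 \<and> nhat s4 = nhat s3) \<or>
     (pp s4 < 1 \<and> (\<exists>Z. nbar s4 = (\<lambda>j. nbar s3 j - Z j)) \<and> Cst s4)"
  using assms by (auto simp: boundary_def Let_def Cst_def split: if_splits)

lemma adv_fields:
  "nloc (adv_upd k s) = nloc s" "ntot (adv_upd k s) = ntot s" "srv_n (adv_upd k s) = srv_n s"
  "srv_sum (adv_upd k s) = srv_sum s" "tau (adv_upd k s) = tau s" "pub (adv_upd k s) = pub s"
  "nbar (adv_upd k s) = nbar s" "nhat (adv_upd k s) = nhat s" "pp (adv_upd k s) = pp s"
  "round_start (adv_upd k s) = round_start s"
  "adv_last (adv_upd k s) = pub s"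
  "adv_site (adv_upd k s) = (if pub s \<noteq> adv_last s then (adv_site s + 1) mod k else adv_site s)"
  by (auto simp: adv_upd_def)

lemma mid_support:
  assumes "s4 \<in> set_pmf (mid k eps s c)"
  obtains s3 bd where "doubling (s2_of k s c) (adv_site s) = (s3, bd)"
    "(\<not> bd \<and> s4 = s3) \<or> (bd \<and> s4 \<in> set_pmf (boundary k eps s3))"
  using assms unfolding mid_def
  by (cases "doubling (s2_of k s c) (adv_site s)") (auto split: if_splits)


definition Inv0 :: "nat \<Rightarrow> real \<Rightarrow> st \<Rightarrow> bool" where
  "Inv0 k eps s \<longleftrightarrow> adv_site s < k \<and> (\<forall>i\<ge>k. nloc s i = 0 \<and> srv_n s i = 0) \<and>
     ntot s = (\<Sum>i<k. nloc s i) \<and> srv_sum s = (\<Sum>i<k. srv_n s i) \<and>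
     (\<forall>i. srv_n s i \<le> nloc s i \<and> (nloc s i = 0 \<longrightarrow> srv_n s i = 0) \<and>
          (0 < nloc s i \<longrightarrow> is_pow2 (srv_n s i) \<and> nloc s i < 2 * srv_n s i)) \<and>
     (\<forall>i. nbar s i \<le> nloc s i) \<and>
     (round_start s \<longrightarrow> pp s = newp k eps (srv_sum s) \<and> tau s = srv_sum s \<and> (pp s < 1 \<longrightarrow> Cst s))"

definition Inv :: "nat \<Rightarrow> real \<Rightarrow> st \<Rightarrow> bool" where
  "Inv k eps s \<longleftrightarrow> Inv0 k eps s \<and> adv_last s = pub s"

lemma Cst_adv[simp]: "Cst (adv_upd k s) = Cst s"
  by (simp add: Cst_def adv_fields)

lemma Inv_init: "k \<ge> 1 \<Longrightarrow> Inv k eps init_st"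
  by (simp add: Inv_def Inv0_def init_st_def)

lemma is_pow2_1: "is_pow2 1"
  unfolding is_pow2_def by (rule exI[of _ 0]) simp

lemma is_pow2_double: "is_pow2 x \<Longrightarrow> is_pow2 (2 * x)"
  unfolding is_pow2_def by (metis power_Suc)

lemma Inv_step:
  assumes inv: "Inv k eps s" and k: "k \<ge> 1" and st: "(c, s') \<in> set_pmf (step k eps s)"
  shows "Inv k eps s'"
proof -
  obtain s4 where s4: "s4 \<in> set_pmf (mid k eps s c)" and s': "s' = adv_upd k s4"
    using step_support[OF st] by blast
  obtain s3 bd where db: "doubling (s2_of k s c) (adv_site s) = (s3, bd)"
    and s4c: "(\<not> bd \<and> s4 = s3) \<or> (bd \<and> s4 \<in> set_pmf (boundary k eps s3))"
    using mid_support[OF s4] by blast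
  define i where "i = adv_site s"
  define m where "m = nloc s i + 1"
  have ik: "i < k" using inv by (simp add: Inv_def Inv0_def i_def)
  note df = doubling_fields[OF db]
  have nloc3: "nloc s3 = (nloc s)(i := m)" using df(1) by (simp add: s2_fields i_def m_def)
  have ntot3: "ntot s3 = ntot s + 1" using df(2) by (simp add: s2_fields)
  have nbar3: "nbar s3 = (if c then (nbar s)(i := m) else nbar s)"
    using df(3) by (simp add: s2_fields i_def m_def)
  have pub3: "pub s3 = pub (s2_of k s c)" "adv_last s3 = adv_last s" "adv_site s3 = i"
    using df by (simp_all add: s2_fields i_def)
  have rs3: "round_start s3 = False" using df by (simp add: s2_fields)
  have dbl: "if is_pow2 m then srv_n s3 = (srv_n s)(i := m) \<and>
        srv_sum s3 = srv_sum s + m - srv_n s i \<and> (bd \<longleftrightarrow> 2 * tau s \<le> srv_sum s3)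
        \<and> tau s3 = (if bd then srv_sum s3 else tau s)
     else srv_n s3 = srv_n s \<and> srv_sum s3 = srv_sum s \<and> \<not> bd \<and> tau s3 = tau s"
    using df(10) by (simp add: s2_fields i_def m_def)
  have invs: "\<forall>i\<ge>k. nloc s i = 0 \<and> srv_n s i = 0" "ntot s = (\<Sum>i<k. nloc s i)"
    "srv_sum s = (\<Sum>i<k. srv_n s i)"
    "\<forall>i. srv_n s i \<le> nloc s i \<and> (nloc s i = 0 \<longrightarrow> srv_n s i = 0) \<and>
          (0 < nloc s i \<longrightarrow> is_pow2 (srv_n s i) \<and> nloc s i < 2 * srv_n s i)"
    "\<forall>i. nbar s i \<le> nloc s i"
    using inv by (simp_all add: Inv_def Inv0_def)
  have A1: "\<forall>j\<ge>k. nloc s3 j = 0 \<and> srv_n s3 j = 0"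
    using invs(1) ik dbl nloc3 by (auto split: if_splits)
  have A2: "ntot s3 = (\<Sum>j<k. nloc s3 j)"
    using sum_upd_nat[OF ik, of "nloc s" m] invs(2) ntot3 nloc3 m_def by simp
  have A3: "srv_sum s3 = (\<Sum>j<k. srv_n s3 j)"
  proof (cases "is_pow2 m")
    case True
    then show ?thesis using dbl sum_upd_nat[OF ik, of "srv_n s" m] invs(3) invs(4) m_def
      by (metis (no_types, lifting) add_diff_cancel_right' le_Suc_eq)
  next
    case False
    then show ?thesis using dbl invs(3) by simp
  qed
  have A4: "\<forall>j. srv_n s3 j \<le> nloc s3 j \<and> (nloc s3 j = 0 \<longrightarrow> srv_n s3 j = 0) \<and>
          (0 < nloc s3 j \<longrightarrow> is_pow2 (srv_n s3 j) \<and> nloc s3 j < 2 * srv_n s3 j)"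
  proof
    fix j
    show "srv_n s3 j \<le> nloc s3 j \<and> (nloc s3 j = 0 \<longrightarrow> srv_n s3 j = 0) \<and>
          (0 < nloc s3 j \<longrightarrow> is_pow2 (srv_n s3 j) \<and> nloc s3 j < 2 * srv_n s3 j)"
    proof (cases "j = i")
      case False
      then show ?thesis using invs(4) dbl nloc3 by (auto split: if_splits)
    next
      case True
      show ?thesis
      proof (cases "is_pow2 m")
        case True
        then show ?thesis using dbl nloc3 \<open>j = i\<close> m_def by auto
      next
        case False
        have pos: "0 < nloc s i" using False is_pow2_1 unfolding m_def by (cases "nloc s i") auto
        then have "is_pow2 (srv_n s i)" "nloc s i < 2 * srv_n s i" using invs(4) by auto
        moreover have "m \<noteq> 2 * srv_n s i" using False is_pow2_double[OF \<open>is_pow2 (srv_n s i)\<close>] by auto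
        ultimately have "m < 2 * srv_n s i" unfolding m_def by linarith
        moreover have "srv_n s i \<le> nloc s i" using invs(4) by auto
        ultimately show ?thesis using dbl False nloc3 \<open>j = i\<close> \<open>is_pow2 (srv_n s i)\<close> m_def by auto
      qed
    qed
  qed
  have A5: "\<forall>j. nbar s3 j \<le> nloc s3 j" using invs(5) nbar3 nloc3 m_def by (auto simp: le_SucI)
  have K: "Inv0 k eps s4"
  proof (cases bd)
    case False
    then have "s4 = s3" using s4c by auto
    then show ?thesis using A1 A2 A3 A4 A5 pub3 rs3 inv ik
      unfolding Inv_def Inv0_def by simp
  next
    case True
    then have b: "s4 \<in> set_pmf (boundary k eps s3)" using s4c by auto
    note bf = boundary_fields[OF b]
    have pw: "is_pow2 m" using dbl True by (auto split: if_splits)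
    have t3: "tau s3 = srv_sum s3" using dbl pw True by auto
    have "\<forall>j. nbar s4 j \<le> nloc s4 j" using bf(1) bf(11) A5 by (metis diff_le_self le_trans)
    then show ?thesis using A1 A2 A3 A4 pub3 ik bf t3 inv
      unfolding Inv_def Inv0_def by auto
  qed
  show ?thesis unfolding s' using K k
    unfolding Inv_def Inv0_def adv_fields by auto
qed


lemma newp_bounds:
  assumes k: "k \<ge> 1" and e: "eps > 0" and t: "real t > 2 * (sqrt (real k) / eps)"
  shows "sqrt (real k) / eps / (2 * real t) < newp k eps t" "newp k eps t \<le> 1/4"
proof -
  define x where "x = sqrt (real k) / (eps * real t)"
  have sk: "sqrt (real k) > 0" using k by simp
  have tpos: "real t > 0" using t sk e by (smt (verit) divide_pos_pos)
  have xpos: "x > 0" unfolding x_def using sk e tpos by simp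
  have xlt: "x < 1/2" unfolding x_def using t e tpos sk
    by (simp add: field_simps)
  have lx: "log 2 x < -1"
  proof -
    have "log 2 x < log 2 (1/2)" using xpos xlt by simp
    then show ?thesis by (simp add: log_divide)
  qed
  define f where "f = \<lfloor>log 2 x\<rfloor>"
  have f1: "f \<le> -2" unfolding f_def using lx by linarith
  have f2: "real_of_int f > log 2 x - 1" unfolding f_def by linarith
  have np: "newp k eps t = 2 powr real_of_int f"
    unfolding newp_def f_def x_def using f1 f_def x_def by (simp add: min_def)
  have "2 powr real_of_int f \<le> 2 powr (-2)" using f1 by (intro powr_mono) auto
  then show "newp k eps t \<le> 1/4" using np by (simp add: powr_minus powr_numeral)
  have a: "2 powr (log 2 x - 1) = x / 2" using xpos by (simp add: powr_diff)
  have b: "2 powr (log 2 x - 1) < 2 powr real_of_int f" using f2 by (rule powr_less_mono) simp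
  have "x / 2 < newp k eps t" using a b np by linarith
  moreover have "sqrt (real k) / eps / (2 * real t) = x / 2" unfolding x_def by (simp add: field_simps)
  ultimately show "sqrt (real k) / eps / (2 * real t) < newp k eps t" by simp
qed


definition W :: "nat \<Rightarrow> real \<Rightarrow> nat \<Rightarrow> st \<Rightarrow> bool" where
  "W k eps n0 s \<longleftrightarrow> Inv k eps s \<and> n0 \<le> ntot s \<and> ntot s \<le> 2 * n0 \<and> n0 < 2 * tau s \<and>
      pp s = newp k eps (tau s) \<and> Cst s"

definition sync :: "nat \<Rightarrow> st \<Rightarrow> bool" where
  "sync k s \<longleftrightarrow> pub s = (\<Sum>j<k. nhat s j)"

definition U :: "nat \<Rightarrow> nat \<Rightarrow> st \<Rightarrow> nat" where
  "U k n0 s = (if sync k s then 0 else 1) + (if tau s \<le> n0 then 1 else 0)"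

lemma Inv_srv_le: "Inv k eps s \<Longrightarrow> srv_sum s \<le> ntot s"
proof -
  assume a: "Inv k eps s"
  have "srv_sum s = (\<Sum>i<k. srv_n s i)" "ntot s = (\<Sum>i<k. nloc s i)" "\<forall>i. srv_n s i \<le> nloc s i"
    using a unfolding Inv_def Inv0_def by blast+
  then show ?thesis by (simp add: sum_mono)
qed

lemma step_ntot: "(c, s') \<in> set_pmf (step k eps s) \<Longrightarrow> ntot s' = ntot s + 1"
proof -
  assume st: "(c, s') \<in> set_pmf (step k eps s)"
  obtain s4 where s4: "s4 \<in> set_pmf (mid k eps s c)" and s': "s' = adv_upd k s4"
    using step_support[OF st] by blast
  obtain s3 bd where db: "doubling (s2_of k s c) (adv_site s) = (s3, bd)"
    and s4c: "(\<not> bd \<and> s4 = s3) \<or> (bd \<and> s4 \<in> set_pmf (boundary k eps s3))"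
    using mid_support[OF s4] by blast
  have "ntot s3 = ntot s + 1" using doubling_fields(2)[OF db] by (simp add: s2_fields)
  show ?thesis
  proof (cases bd)
    case True
    then have "s4 \<in> set_pmf (boundary k eps s3)" using s4c by auto
    then show ?thesis using boundary_fields(2) \<open>ntot s3 = ntot s + 1\<close> s' by (simp add: adv_fields)
  next
    case False
    then show ?thesis using s4c \<open>ntot s3 = ntot s + 1\<close> s' by (simp add: adv_fields)
  qed
qed

lemma pp_W:
  assumes k: "k \<ge> 1" and e: "eps > 0" and n0: "4 * (sqrt (real k) / eps) \<le> real n0"
    and w: "W k eps n0 s"
  shows "sqrt (real k) / eps / (2 * real (tau s)) < pp s" "pp s \<le> 1/4" "0 < pp s"
proof -
  have "real n0 < 2 * real (tau s)" using w unfolding W_def by linarith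
  then have t: "real (tau s) > 2 * (sqrt (real k) / eps)" using n0 by linarith
  have pe: "pp s = newp k eps (tau s)" using w unfolding W_def by simp
  show "sqrt (real k) / eps / (2 * real (tau s)) < pp s" "pp s \<le> 1/4"
    using newp_bounds[OF k e t] pe by auto
  moreover have "0 < sqrt (real k) / eps / (2 * real (tau s))"
  proof -
    have "0 < sqrt (real k) / eps" using k e by simp
    moreover have "0 < 2 * real (tau s)" using t \<open>0 < sqrt (real k) / eps\<close> by linarith
    ultimately show ?thesis by (rule divide_pos_pos)
  qed
  ultimately show "0 < pp s" by linarith
qed

lemma Cst_s2:
  assumes "Cst s"
  shows "Cst (s2_of k s c)"
  using assms unfolding Cst_def by (auto simp: s2_fields)

lemma W_step:
  assumes k: "k \<ge> 1" and e: "eps > 0" and n0: "4 * (sqrt (real k) / eps) \<le> real n0"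
    and w: "W k eps n0 s" and lt: "ntot s < 2 * n0"
    and st: "(c, s1) \<in> set_pmf (step k eps s)"
  shows "W k eps n0 s1" "ntot s1 = ntot s + 1"
    "tau s1 = tau s \<or> (2 * tau s \<le> tau s1 \<and> tau s1 \<le> ntot s1)"
    "\<exists>mv. adv_site s1 = (if mv then (adv_site s + 1) mod k else adv_site s) \<and> (mv \<longrightarrow> c) \<and>
        U k n0 s1 + (if c \<and> \<not> mv then 1 else 0) \<le> U k n0 s"
proof -
  have inv: "Inv k eps s" using w by (simp add: W_def)
  have inv1: "Inv k eps s1" using Inv_step[OF inv k st] .
  show nt: "ntot s1 = ntot s + 1" using step_ntot[OF st] .
  obtain s4 where s4: "s4 \<in> set_pmf (mid k eps s c)" and s': "s1 = adv_upd k s4"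
    using step_support[OF st] by blast
  obtain s3 bd where db: "doubling (s2_of k s c) (adv_site s) = (s3, bd)"
    and s4c: "(\<not> bd \<and> s4 = s3) \<or> (bd \<and> s4 \<in> set_pmf (boundary k eps s3))"
    using mid_support[OF s4] by blast
  define i where "i = adv_site s"
  define s2 where "s2 = s2_of k s c"
  have ik: "i < k" using inv by (simp add: Inv_def Inv0_def i_def)
  note df = doubling_fields[OF db]
  have dbl: "(bd \<longrightarrow> 2 * tau s \<le> srv_sum s3 \<and> tau s3 = srv_sum s3) \<and> (\<not> bd \<longrightarrow> tau s3 = tau s)"
    using df(10) by (auto simp: s2_fields split: if_splits)
  have ppp: "0 < pp s" "pp s \<le> 1/4" using pp_W[OF k e n0 w] by auto
  have Cs: "Cst s" using w by (simp add: W_def)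
  have C3: "Cst s3" using Cst_s2[OF Cs, of k c] df unfolding Cst_def by simp
  have ntot3: "ntot s3 = ntot s + 1" using df(2) by (simp add: s2_fields)
  have f1: "tau s1 = tau s4" "pp s1 = pp s4" "ntot s1 = ntot s4" "srv_sum s1 = srv_sum s4"
    "pub s1 = pub s4" "nhat s1 = nhat s4" using s' by (simp_all add: adv_fields)
  have srvle: "srv_sum s1 \<le> ntot s1" using Inv_srv_le[OF inv1] .
  have al: "adv_last s = pub s" using inv by (simp add: Inv_def)
  have pub2: "pub s4 = pub s2 \<and> adv_site s4 = i \<and> adv_last s4 = pub s \<and> tau s4 = tau s3"
  proof (cases bd)
    case True
    then have b: "s4 \<in> set_pmf (boundary k eps s3)" using s4c by auto
    show ?thesis using boundary_fields(6,7,8,5)[OF b] df(6,7,8) al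
      by (simp add: s2_def s2_fields i_def)
  next
    case False
    then have "s4 = s3" using s4c by auto
    then show ?thesis using df(6,7,8) al by (simp add: s2_def s2_fields i_def)
  qed
  have bdcase: "bd \<Longrightarrow> tau s \<le> n0 \<and> n0 < tau s1 \<and> 2 * tau s \<le> tau s1 \<and> tau s1 \<le> ntot s1
      \<and> pp s1 = newp k eps (tau s1) \<and> Cst s1"
  proof -
    assume bd
    then have b: "s4 \<in> set_pmf (boundary k eps s3)" using s4c by auto
    note bf = boundary_fields[OF b]
    have t1: "tau s1 = srv_sum s3" using dbl \<open>bd\<close> bf(5) f1 by simp
    have t2: "2 * tau s \<le> tau s1" using dbl \<open>bd\<close> t1 by simp
    have t3: "tau s1 \<le> ntot s1" using srvle t1 f1 bf(4) by simp
    have "n0 < 2 * tau s" using w by (simp add: W_def)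
    have "real (srv_sum s3) > 2 * (sqrt (real k) / eps)"
      using t2 t1 \<open>n0 < 2 * tau s\<close> n0 by linarith
    then have "pp s4 < 1" using newp_bounds(2)[OF k e] bf(9) by fastforce
    then have "Cst s4" using bf(11) by auto
    then show ?thesis using t1 t2 t3 nt lt \<open>n0 < 2 * tau s\<close> bf(9) f1 s'
      by auto
  qed
  have nbcase: "\<not> bd \<Longrightarrow> s4 = s3" using s4c by auto
  show tt: "tau s1 = tau s \<or> (2 * tau s \<le> tau s1 \<and> tau s1 \<le> ntot s1)"
    using bdcase nbcase dbl f1 by (cases bd) auto
  show "W k eps n0 s1"
  proof (cases bd)
    case True
    then show ?thesis using bdcase inv1 nt lt w unfolding W_def by auto
  next
    case False
    then have "s4 = s3" using nbcase by auto
    then show ?thesis using inv1 nt lt w f1 dbl False df(5) C3 s'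
      unfolding W_def by (auto simp: s2_fields)
  qed
  define mv where "mv = (pub s2 \<noteq> pub s)"
  have adv1: "adv_site s1 = (if mv then (adv_site s + 1) mod k else adv_site s)"
    using s' pub2 by (simp add: adv_fields mv_def i_def)
  have mvc: "mv \<longrightarrow> c" unfolding mv_def s2_def by (simp add: s2_fields)
  have sync_mv: "c \<Longrightarrow> sync k s \<Longrightarrow> mv"
  proof -
    assume c: c and sy: "sync k s"
    have le: "nbar s i \<le> nloc s i" using inv by (simp add: Inv_def Inv0_def)
    have "nhat s i < real (nloc s i) + 1 / pp s"
    proof (cases "nbar s i = 0")
      case True
      have "0 < 1 / pp s" using ppp by simp
      then have "0 < real (nloc s i) + 1 / pp s" by (smt (verit) of_nat_0_le_iff)
      then show ?thesis using Cs True unfolding Cst_def by simp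
    next
      case False
      then have "nhat s i = real (nbar s i) - 1 + 1 / pp s" using Cs unfolding Cst_def by simp
      then show ?thesis using le by simp
    qed
    moreover have "pub s2 = (\<Sum>j<k. nhat s j) - nhat s i + (real (nloc s i) + 1 / pp s)"
      using c sum_upd_real[OF ik] by (simp add: s2_def s2_fields i_def)
    ultimately have "pub s2 > pub s" using sy unfolding sync_def by linarith
    then show mv unfolding mv_def by simp
  qed
  have sync2: "c \<Longrightarrow> sync k s2"
    unfolding sync_def s2_def by (simp add: s2_fields)
  have sync2': "\<not> c \<Longrightarrow> sync k s2 = sync k s"
    unfolding sync_def s2_def by (simp add: s2_fields)
  have Ub: "U k n0 s1 + (if c \<and> \<not> mv then 1 else 0) \<le> U k n0 s"
  proof (cases bd)
    case True
    note bc = bdcase[OF True]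
    have "U k n0 s1 \<le> 1" using bc unfolding U_def by auto
    moreover have "U k n0 s = (if sync k s then 0 else 1) + 1" using bc unfolding U_def by auto
    ultimately show ?thesis using sync_mv by auto
  next
    case False
    then have "s4 = s3" using nbcase by auto
    then have "nhat s1 = nhat s2" "pub s1 = pub s2" using f1 df(4) df(6) s2_def by simp_all
    then have eq: "tau s1 = tau s" "sync k s1 = sync k s2"
      using f1 dbl False \<open>s4 = s3\<close> unfolding sync_def by auto
    show ?thesis
    proof (cases c)
      case True
      then show ?thesis using eq sync2 sync_mv unfolding U_def by auto
    next
      case False
      then show ?thesis using eq sync2' unfolding U_def by auto
    qed
  qed
  show "\<exists>mv. adv_site s1 = (if mv then (adv_site s + 1) mod k else adv_site s) \<and> (mv \<longrightarrow> c) \<and>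
        U k n0 s1 + (if c \<and> \<not> mv then 1 else 0) \<le> U k n0 s"
    using adv1 mvc Ub by blast
qed


fun exec2 :: "nat \<Rightarrow> real \<Rightarrow> nat \<Rightarrow> st \<Rightarrow> (nat set \<times> nat \<times> st) pmf" where
  "exec2 k eps 0 s = return_pmf ({}, 0, s)"
| "exec2 k eps (Suc m) s = bind_pmf (step k eps s) (\<lambda>(c, s1).
      map_pmf (\<lambda>(R, r, s2). ((if c then {adv_site s} else {}) \<union> R, (if c then 1 else 0) + r, s2))
        (exec2 k eps m s1))"

lemma exec_exec2: "exec k eps m s = map_pmf (\<lambda>(R, r, s'). (R, s')) (exec2 k eps m s)"
proof (induction m arbitrary: s)
  case 0
  then show ?case by simp
next
  case (Suc m)
  show ?case
    by (auto simp: Suc.IH map_bind_pmf pmf.map_comp o_def split_beta intro!: bind_pmf_cong)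
qed

lemma exec2_Suc_support:
  assumes "x \<in> set_pmf (exec2 k eps (Suc m) s)"
  obtains c s1 R1 r1 s2 where "(c, s1) \<in> set_pmf (step k eps s)"
    "(R1, r1, s2) \<in> set_pmf (exec2 k eps m s1)"
    "x = ((if c then {adv_site s} else {}) \<union> R1, (if c then 1 else 0) + r1, s2)"
  using assms by (auto simp: split_beta)

lemma exec2_reach:
  assumes "Inv k eps s" "k \<ge> 1" "x \<in> set_pmf (exec2 k eps m s)"
  shows "Inv k eps (snd (snd x)) \<and> ntot (snd (snd x)) = ntot s + m \<and> fst x \<subseteq> {..<k}
     \<and> (fst (snd x) = 0 \<longleftrightarrow> fst x = {})"
  using assms
proof (induction m arbitrary: s x)
  case 0
  then show ?case by simp
next
  case (Suc m)
  obtain c s1 R1 r1 s2 where st: "(c, s1) \<in> set_pmf (step k eps s)"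
    and ex: "(R1, r1, s2) \<in> set_pmf (exec2 k eps m s1)"
    and x: "x = ((if c then {adv_site s} else {}) \<union> R1, (if c then 1 else 0) + r1, s2)"
    using exec2_Suc_support[OF Suc.prems(3)] by blast
  have i1: "Inv k eps s1" using Inv_step[OF Suc.prems(1) Suc.prems(2) st] .
  have IH: "Inv k eps s2 \<and> ntot s2 = ntot s1 + m \<and> R1 \<subseteq> {..<k} \<and> (r1 = 0 \<longleftrightarrow> R1 = {})"
    using Suc.IH[OF i1 Suc.prems(2) ex] by simp
  have "adv_site s < k" using Suc.prems(1) by (simp add: Inv_def Inv0_def)
  then show ?case using IH x step_ntot[OF st] by auto
qed

definition img :: "nat \<Rightarrow> nat \<Rightarrow> nat \<Rightarrow> nat set" where
  "img k u d = (\<lambda>j. (u + j) mod k) ` {..<d}"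

lemma aux_mod: "b < k \<Longrightarrow> (b + t) mod k = b \<Longrightarrow> t < (k::nat) \<Longrightarrow> t = 0"
  by (metis add.commute add_diff_cancel_left' div_mod_decomp mod_less
    mod_mult_self1_is_0 mult.commute)

lemma aux2_mod: "(a + t) mod k = a mod k \<Longrightarrow> t < (k::nat) \<Longrightarrow> t = 0"
proof -
  assume h: "(a + t) mod k = a mod k" "t < k"
  have "(a mod k + t) mod k = a mod k" using h(1) by (simp add: mod_add_left_eq)
  moreover have "a mod k < k" using h(2) by simp
  ultimately show ?thesis using aux_mod h(2) by blast
qed

lemma modinj: "(u + i) mod k = (u + j) mod (k::nat) \<Longrightarrow> i < k \<Longrightarrow> j < k \<Longrightarrow> i = j"
proof -
  assume a: "(u + i) mod k = (u + j) mod k" "i < k" "j < k"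
  show "i = j"
  proof (cases "i \<le> j")
    case True
    then have e: "u + i + (j - i) = u + j" by simp
    have "(u + i + (j - i)) mod k = (u + i) mod k" using a(1) unfolding e by simp
    moreover have "j - i < k" using a(3) by linarith
    ultimately have "j - i = 0" using aux2_mod by blast
    then show ?thesis using True by simp
  next
    case False
    then have e: "u + j + (i - j) = u + i" by simp
    have "(u + j + (i - j)) mod k = (u + j) mod k" using a(1) unfolding e by simp
    moreover have "i - j < k" using a(2) by linarith
    ultimately have "i - j = 0" using aux2_mod by blast
    then show ?thesis using False by simp
  qed
qed

lemma card_img: "d \<le> k \<Longrightarrow> card (img k u d) = d"
  unfolding img_def
  by (subst card_image) (auto intro!: inj_onI dest: modinj)

lemma img_mono: "d \<le> d' \<Longrightarrow> img k u d \<subseteq> img k u d'"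
  unfolding img_def by auto

lemma img_Suc: "img k u (Suc d) = insert ((u + d) mod k) (img k u d)"
  unfolding img_def by (auto simp: lessThan_Suc)

lemma card_part:
  assumes k: "k \<ge> 1" and e: "eps > 0" and n0: "4 * (sqrt (real k) / eps) \<le> real n0"
  shows "W k eps n0 s \<Longrightarrow> ntot s + m = 2 * n0 \<Longrightarrow> img k u d \<subseteq> A \<Longrightarrow>
    adv_site s = (u + d) mod k \<Longrightarrow> (R, r, s') \<in> set_pmf (exec2 k eps m s) \<Longrightarrow>
    \<exists>d'. img k u d' \<subseteq> A \<union> R \<and> d + r \<le> d' + U k n0 s"
proof (induction m arbitrary: s A d R r s')
  case 0
  then show ?case by auto
next
  case (Suc m)
  obtain c s1 R1 r1 s2 where st: "(c, s1) \<in> set_pmf (step k eps s)"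
    and ex: "(R1, r1, s2) \<in> set_pmf (exec2 k eps m s1)"
    and x: "(R, r, s') = ((if c then {adv_site s} else {}) \<union> R1, (if c then 1 else 0) + r1, s2)"
    using exec2_Suc_support[OF Suc.prems(5)] by blast
  have lt: "ntot s < 2 * n0" using Suc.prems(2) by simp
  note ws = W_step[OF k e n0 Suc.prems(1) lt st]
  obtain mv where mv: "adv_site s1 = (if mv then (adv_site s + 1) mod k else adv_site s)"
    "mv \<longrightarrow> c" "U k n0 s1 + (if c \<and> \<not> mv then 1 else 0) \<le> U k n0 s"
    using ws(4) by blast
  define d1 where "d1 = d + (if mv then 1 else 0)"
  define A1 where "A1 = A \<union> (if c then {adv_site s} else {})"
  have h1: "img k u d1 \<subseteq> A1"
    using Suc.prems(3,4) mv(2) unfolding d1_def A1_def by (auto simp: img_Suc)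
  have h2: "adv_site s1 = (u + d1) mod k"
    using mv(1) Suc.prems(4) unfolding d1_def by (auto simp: mod_Suc_eq)
  have h3: "ntot s1 + m = 2 * n0" using ws(2) Suc.prems(2) by simp
  obtain d' where d': "img k u d' \<subseteq> A1 \<union> R1" "d1 + r1 \<le> d' + U k n0 s1"
    using Suc.IH[OF ws(1) h3 h1 h2 ex] by blast
  have "A1 \<union> R1 = A \<union> R" using x unfolding A1_def by auto
  moreover have "d + r \<le> d' + U k n0 s"
    using d'(2) mv(3) x unfolding d1_def by (auto split: if_splits)
  ultimately show ?case using d'(1) by auto
qed


lemma c1: fixes E N t :: real
  assumes "0 < t" "2*t < N" "E \<le> 2 * N" "0 < E"
  shows "(E - N)/(2*N) - (E-N-1)/(2*(N+1)) \<le> 1/(2*t)"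
proof -
  have "(E - N)/(2*N) - (E-N-1)/(2*(N+1)) = E / (2*N*(N+1))"
    using assms by (simp add: field_simps)
  also have "\<dots> \<le> 1/(2*t)"
  proof -
    have "E * t \<le> N * (N+1)"
    proof -
      have "E * t \<le> (2*N) * t" using assms by (intro mult_right_mono) auto
      also have "\<dots> = N * (2 * t)" by simp
      also have "\<dots> \<le> N * N" using assms by (intro mult_left_mono) auto
      also have "\<dots> \<le> N * (N+1)" using assms by (intro mult_left_mono) auto
      finally show ?thesis .
    qed
    have Np: "0 < N * (N+1)" using assms by (smt (verit) mult_pos_pos)
    have "E / (2*N*(N+1)) = (E*t/(N*(N+1))) * (1/(2*t))" using assms by (simp add: field_simps)
    also have "\<dots> \<le> 1 * (1/(2*t))"
    proof (rule mult_right_mono)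
      show "E*t/(N*(N+1)) \<le> 1" using \<open>E * t \<le> N * (N+1)\<close> Np by (simp add: divide_le_eq)
    qed (use assms in simp)
    finally show ?thesis by simp
  qed
  finally show ?thesis .
qed

lemma c2: fixes E t :: real
  assumes "0 < t" "E \<le> 4*t + 2"
  shows "(E - 2*t)/(4*t) - (E-2*t-1)/(2*(2*t+1)) \<le> 1/(2*t)"
proof -
  have "(E - 2*t)/(4*t) - (E-2*t-1)/(2*(2*t+1)) = E / (4*t*(2*t+1))"
    using assms by (simp add: field_simps)
  also have "\<dots> = (E/(2*(2*t+1))) * (1/(2*t))" using assms by (simp add: field_simps)
  also have "\<dots> \<le> 1 * (1/(2*t))"
  proof (rule mult_right_mono)
    show "E/(2*(2*t+1)) \<le> 1" using assms by (simp add: divide_le_eq)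
  qed (use assms in simp)
  finally show ?thesis by simp
qed

definition Phif :: "nat \<Rightarrow> nat \<Rightarrow> nat \<Rightarrow> real" where
  "Phif n0 N t = (if t \<le> n0 then (if N \<le> 2 * t then (2 * real n0 - 2 * real N + 2 * real t) / (4 * real t)
      else (2 * real n0 - real N) / (2 * real N)) else (2 * real n0 - real N) / (2 * real t))"

lemma phi_init: "n0 < 2 * t \<Longrightarrow> t \<le> n0 \<Longrightarrow> Phif n0 n0 t = 1/2"
proof -
  assume a: "n0 < 2 * t" "t \<le> n0"
  then have "Phif n0 n0 t = (2 * real t) / (4 * real t)" unfolding Phif_def by simp
  also have "\<dots> = 1/2" using a by simp
  finally show ?thesis .
qed

lemma phi_end: "n0 < 2 * t \<Longrightarrow> Phif n0 (2 * n0) t \<le> 0"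
proof -
  assume a: "n0 < 2 * t"
  show ?thesis
  proof (cases "t \<le> n0")
    case True
    show ?thesis
    proof (cases "2 * n0 \<le> 2 * t")
      case True
      then have "t = n0" using \<open>t \<le> n0\<close> by simp
      then show ?thesis unfolding Phif_def by simp
    next
      case False
      then show ?thesis using \<open>t \<le> n0\<close> unfolding Phif_def by simp
    qed
  next
    case False
    then show ?thesis unfolding Phif_def by simp
  qed
qed

lemma phi_nonneg: "N \<le> 2 * n0 \<Longrightarrow> n0 < 2 * t \<Longrightarrow> 0 \<le> Phif n0 N t"
proof -
  assume a: "N \<le> 2 * n0" "n0 < 2 * t"
  have "0 \<le> 2 * real n0 - 2 * real N + 2 * real t" if "N \<le> 2 * t" using a that by linarith
  moreover have "0 \<le> 2 * real n0 - real N" using a by linarith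
  ultimately show ?thesis unfolding Phif_def by (auto intro!: divide_nonneg_nonneg)
qed

lemma phi_dec:
  assumes "n0 \<le> N" "N < 2 * n0" "n0 < 2 * t" "t1 = t \<or> (2 * t \<le> t1 \<and> t1 \<le> N + 1)"
  shows "Phif n0 N t - Phif n0 (N + 1) t1 \<le> 1 / (2 * real t)"
proof -
  define E where "E = 2 * real n0"
  have tp: "0 < real t" using assms(3) by simp
  have Ep: "0 < E" using assms unfolding E_def by simp
  have EN: "E \<le> 2 * real N" using assms(1) unfolding E_def by simp
  have E4: "E \<le> 4 * real t + 2" using assms(3) unfolding E_def by simp
  have key: "Phif n0 N t - (E - real N - 1) / (2 * (real N + 1)) \<le> 1 / (2 * real t)"
    if tha: "t \<le> n0" "2 * t \<le> N + 1"
  proof -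
    consider "N + 1 = 2 * t" | "N = 2 * t" | "2 * t < N" using tha by linarith
    then show ?thesis
    proof cases
      case 1
      then have "Phif n0 N t = (E - 2 * real N + 2 * real t) / (4 * real t)"
        using tha unfolding Phif_def E_def by auto
      moreover have r: "real N + 1 = 2 * real t"
      proof -
        have "real (N + 1) = real (2 * t)" using 1 by simp
        then show ?thesis by simp
      qed
      moreover have "(E - real N - 1) / (2 * (real N + 1)) = (E - 2 * real t) / (4 * real t)"
        using r by (simp add: algebra_simps)
      ultimately have "Phif n0 N t - (E - real N - 1) / (2 * (real N + 1)) =
          (E - 2 * real N + 2 * real t) / (4 * real t) - (E - 2 * real t) / (4 * real t)"
        by simp
      also have "\<dots> = ((E - 2 * real N + 2 * real t) - (E - 2 * real t)) / (4 * real t)"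
        by (rule diff_divide_distrib[symmetric])
      also have "(E - 2 * real N + 2 * real t) - (E - 2 * real t) = 2" using r by linarith
      also have "2 / (4 * real t) = 1 / (2 * real t)" by simp
      finally show ?thesis by simp
    next
      case 2
      then have "Phif n0 N t = (E - 2 * real t) / (4 * real t)"
        using tha unfolding Phif_def E_def by (auto simp: field_simps)
      then show ?thesis using c2[OF tp E4] 2 by simp
    next
      case 3
      then have "Phif n0 N t = (E - real N) / (2 * real N)"
        using tha unfolding Phif_def E_def by auto
      moreover have "2 * real t < real N" using 3 by linarith
      ultimately show ?thesis using c1[OF tp _ EN Ep] by simp
    qed
  qed
  show ?thesis
  proof (cases "t1 = t")
    case True
    show ?thesis
    proof (cases "t \<le> n0")
      case False
      then show ?thesis using True tp unfolding Phif_def by (simp add: field_simps)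
    next
      case tn: True
      show ?thesis
      proof (cases "N + 1 \<le> 2 * t")
        case True
        then show ?thesis using \<open>t1 = t\<close> tn tp unfolding Phif_def by (simp add: field_simps)
      next
        case False
        then have "Phif n0 (N + 1) t1 = (E - real N - 1) / (2 * (real N + 1))"
          using \<open>t1 = t\<close> tn unfolding Phif_def E_def by (auto simp: algebra_simps)
        then show ?thesis using key[OF tn] False by simp
      qed
    qed
  next
    case False
    then have t1: "2 * t \<le> t1" "t1 \<le> N + 1" using assms(4) by auto
    have tn: "t \<le> n0" using t1 assms(2) by linarith
    have "n0 < t1" using t1 assms(3) by linarith
    then have ph1: "Phif n0 (N + 1) t1 = (E - real N - 1) / (2 * real t1)"
      unfolding Phif_def E_def by auto
    have "(E - real N - 1) / (2 * (real N + 1)) \<le> (E - real N - 1) / (2 * real t1)"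
    proof (rule divide_left_mono)
      show "0 \<le> E - real N - 1" using assms(2) unfolding E_def by linarith
      have "real t1 \<le> real N + 1" using t1(2) by (metis of_nat_1 of_nat_add of_nat_le_iff)
      then show "2 * real t1 \<le> 2 * (real N + 1)" by simp
      show "0 < 2 * (real N + 1) * (2 * real t1)" using \<open>n0 < t1\<close> by simp
    qed
    then show ?thesis using key[OF tn] t1 ph1 by linarith
  qed
qed


definition Lam :: "nat \<Rightarrow> real \<Rightarrow> nat \<Rightarrow> st \<Rightarrow> real" where
  "Lam k eps n0 s = sqrt (real k) / eps * Phif n0 (ntot s) (tau s)"

lemma Lam_step:
  assumes k: "k \<ge> 1" and e: "eps > 0" and n0: "4 * (sqrt (real k) / eps) \<le> real n0"
    and w: "W k eps n0 s" and lt: "ntot s < 2 * n0"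
    and st: "(c, s1) \<in> set_pmf (step k eps s)"
  shows "Lam k eps n0 s - pp s \<le> Lam k eps n0 s1" "0 \<le> Lam k eps n0 s1"
proof -
  note ws = W_step[OF k e n0 w lt st]
  have w1: "n0 \<le> ntot s" "n0 < 2 * tau s" using w unfolding W_def by auto
  have w2: "ntot s1 \<le> 2 * n0" "n0 < 2 * tau s1" using ws(1) unfolding W_def by auto
  have d: "Phif n0 (ntot s) (tau s) - Phif n0 (ntot s + 1) (tau s1) \<le> 1 / (2 * real (tau s))"
    using phi_dec[OF w1(1) lt w1(2)] ws(3) ws(2) by auto
  define S where "S = sqrt (real k) / eps"
  have Sp: "0 < S" unfolding S_def using k e by simp
  have "S * Phif n0 (ntot s) (tau s) - S * Phif n0 (ntot s + 1) (tau s1) \<le> S * (1 / (2 * real (tau s)))"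
    using mult_left_mono[OF d, of S] Sp by (simp add: right_diff_distrib)
  moreover have "S * (1 / (2 * real (tau s))) < pp s"
    using pp_W(1)[OF k e n0 w] unfolding S_def by simp
  ultimately show "Lam k eps n0 s - pp s \<le> Lam k eps n0 s1"
    unfolding Lam_def S_def[symmetric] using ws(2) by simp
  show "0 \<le> Lam k eps n0 s1"
    unfolding Lam_def using phi_nonneg[OF w2] Sp unfolding S_def by (intro mult_nonneg_nonneg) auto
qed

lemma step_nn_bound:
  assumes p: "0 < pp s" "pp s < 1"
    and b: "\<And>c s1. (c, s1) \<in> set_pmf (step k eps s) \<Longrightarrow> f (c, s1) \<le> ennreal (if c then B1 else B0)"
    and Bnn: "0 \<le> B1" "0 \<le> B0"
  shows "(\<integral>\<^sup>+x. f x \<partial>step k eps s) \<le> ennreal (pp s * B1 + (1 - pp s) * B0)"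
proof -
  define B where "B = (\<lambda>c. if c then B1 else B0)"
  have b: "\<And>c s1. (c, s1) \<in> set_pmf (step k eps s) \<Longrightarrow> f (c, s1) \<le> ennreal (B c)"
    using b unfolding B_def .
  have Bnn: "\<And>c. 0 \<le> B c" using Bnn unfolding B_def by auto
  have "(\<integral>\<^sup>+x. f x \<partial>step k eps s) \<le> (\<integral>\<^sup>+x. ennreal (B (fst x)) \<partial>step k eps s)"
    by (intro nn_integral_mono_AE) (auto simp: AE_measure_pmf_iff intro: b)
  also have "\<dots> = (\<integral>\<^sup>+c. ennreal (B c) \<partial>bernoulli_pmf (pp s))"
    unfolding step_alt by (simp add: measure_pmf.emeasure_space_1)
  also have "\<dots> = ennreal (B True) * ennreal (pp s) + ennreal (B False) * ennreal (1 - pp s)"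
    using p by (subst nn_integral_bernoulli_pmf) auto
  also have "\<dots> = ennreal (pp s * B True + (1 - pp s) * B False)"
    using p Bnn by (simp add: ennreal_mult' ennreal_plus mult.commute)
  finally show ?thesis unfolding B_def by simp
qed

lemma pot_bound:
  fixes G :: "'i \<Rightarrow> nat \<Rightarrow> real" and V :: "'i \<Rightarrow> real \<Rightarrow> real" and sh :: "'i \<Rightarrow> 'i"
  assumes Gsh: "\<And>i r. G i (Suc r) = G (sh i) r"
    and base: "\<And>i. G i 0 \<le> V i 0"
    and loc: "\<And>i lam p. 0 \<le> lam \<Longrightarrow> 0 < p \<Longrightarrow> p \<le> 1/4 \<Longrightarrow>
        (1 - p) * V i (max 0 (lam - p)) + p * V (sh i) (max 0 (lam - p)) \<le> V i lam"
    and Vnn: "\<And>i lam. 0 \<le> lam \<Longrightarrow> 0 \<le> V i lam"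
    and k: "k \<ge> 1" and e: "eps > 0" and n0: "4 * (sqrt (real k) / eps) \<le> real n0"
  shows "W k eps n0 s \<Longrightarrow> ntot s + m = 2 * n0 \<Longrightarrow> 0 \<le> lam \<Longrightarrow> lam \<le> Lam k eps n0 s \<Longrightarrow>
    (\<integral>\<^sup>+x. ennreal (G i (fst (snd x))) \<partial>exec2 k eps m s) \<le> ennreal (V i lam)"
proof (induction m arbitrary: s i lam)
  case 0
  have "n0 < 2 * tau s" using 0(1) unfolding W_def by auto
  then have "Phif n0 (ntot s) (tau s) \<le> 0" using phi_end 0(2) by simp
  moreover have "0 \<le> sqrt (real k) / eps" using e by simp
  ultimately have "Lam k eps n0 s \<le> 0" unfolding Lam_def
    by (intro mult_nonneg_nonpos) auto
  then have "lam = 0" using 0 by linarith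
  then show ?case using base[of i] by (simp add: ennreal_leI)
next
  case (Suc m)
  have lt: "ntot s < 2 * n0" using Suc.prems(2) by simp
  define lam' where "lam' = max 0 (lam - pp s)"
  have ppb: "0 < pp s" "pp s \<le> 1/4" using pp_W[OF k e n0 Suc.prems(1)] by auto
  have inner: "(\<integral>\<^sup>+y. ennreal (G i ((if c then 1 else 0) + fst (snd y))) \<partial>exec2 k eps m s1)
      \<le> ennreal (if c then V (sh i) lam' else V i lam')"
    if st: "(c, s1) \<in> set_pmf (step k eps s)" for c s1
  proof -
    note ws = W_step[OF k e n0 Suc.prems(1) lt st]
    note ls = Lam_step[OF k e n0 Suc.prems(1) lt st]
    have h2: "ntot s1 + m = 2 * n0" using ws(2) Suc.prems(2) by simp
    have h3: "0 \<le> lam'" unfolding lam'_def by simp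
    have h4: "lam' \<le> Lam k eps n0 s1" unfolding lam'_def using ls Suc.prems(4) by auto
    show ?thesis
    proof (cases c)
      case True
      have "(\<integral>\<^sup>+y. ennreal (G i ((if c then 1 else 0) + fst (snd y))) \<partial>exec2 k eps m s1)
          = (\<integral>\<^sup>+y. ennreal (G (sh i) (fst (snd y))) \<partial>exec2 k eps m s1)"
        using True by (simp add: Gsh)
      also have "\<dots> \<le> ennreal (V (sh i) lam')" using Suc.IH[OF ws(1) h2 h3 h4] .
      finally show ?thesis using True by simp
    next
      case False
      then show ?thesis using Suc.IH[OF ws(1) h2 h3 h4] by simp
    qed
  qed
  have "(\<integral>\<^sup>+x. ennreal (G i (fst (snd x))) \<partial>exec2 k eps (Suc m) s)
     = (\<integral>\<^sup>+x. (case x of (c, s1) \<Rightarrow> \<integral>\<^sup>+y. ennreal (G i ((if c then 1 else 0) + fst (snd y))) \<partial>exec2 k eps m s1) \<partial>step k eps s)"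
    by (simp add: split_beta)
  also have "\<dots> \<le> ennreal (pp s * V (sh i) lam' + (1 - pp s) * V i lam')"
  proof (rule step_nn_bound)
    have "0 \<le> lam'" unfolding lam'_def by simp
    then show "0 \<le> V (sh i) lam'" "0 \<le> V i lam'" using Vnn by auto
  qed (use ppb inner in auto)
  also have "\<dots> \<le> ennreal (V i lam)"
  proof (rule ennreal_leI)
    show "pp s * V (sh i) lam' + (1 - pp s) * V i lam' \<le> V i lam"
      using loc[OF Suc.prems(3) ppb, of i] unfolding lam'_def by (simp add: algebra_simps)
  qed
  finally show ?case .
qed


lemma exp_lower_sum:
  fixes x :: real
  assumes "0 \<le> x"
  shows "(\<Sum>n<N. x ^ n / fact n) \<le> exp x"
proof -
  have "(\<Sum>n<N. inverse (fact n) * x ^ n) \<le> (\<Sum>n. inverse (fact n) * x ^ n)"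
    using assms by (intro sum_le_suminf[OF summable_exp]) (auto simp: zero_le_mult_iff)
  then show ?thesis by (simp add: exp_def field_simps)
qed

lemma e_ge: "2.718 \<le> exp (1::real)"
  using e_approx_32 by (simp add: abs_if split: if_splits)

lemma ln2_le: "ln 2 \<le> (3/4::real)"
proof -
  have "(\<Sum>n<3. (3/4::real) ^ n / fact n) \<le> exp (3/4)" by (rule exp_lower_sum) simp
  moreover have "(\<Sum>n<3. (3/4::real) ^ n / fact n) = 1 + 3/4 + 9/32"
    by (simp add: eval_nat_numeral)
  ultimately have "2 \<le> exp (3/4::real)" by simp
  then show ?thesis by (metis exp_le_cancel_iff exp_ln zero_less_numeral)
qed

lemma num1: "118/3 \<le> exp (3.6875::real)"
proof -
  have a: "exp (3.6875::real) = exp 1 ^ 3 * exp 0.6875"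
    by (simp add: exp_add[symmetric] exp_of_nat_mult[symmetric])
  have "(\<Sum>n<4. (0.6875::real) ^ n / fact n) \<le> exp 0.6875" by (rule exp_lower_sum) simp
  moreover have "(\<Sum>n<4. (0.6875::real) ^ n / fact n) \<ge> 1.9779"
    by (simp add: eval_nat_numeral)
  ultimately have b: "1.9779 \<le> exp (0.6875::real)" by simp
  have c: "2.718 ^ 3 \<le> exp (1::real) ^ 3" using e_ge by (intro power_mono) auto
  have "(2.718::real) ^ 3 * 1.9779 \<le> exp 1 ^ 3 * exp 0.6875"
    using b c by (intro mult_mono) auto
  moreover have "118/3 \<le> (2.718::real) ^ 3 * 1.9779" by (simp add: eval_nat_numeral)
  ultimately show ?thesis using a by linarith
qed

lemma num2: "67.5 \<le> exp (4.625::real)"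
proof -
  have a: "exp (4.625::real) = exp 1 ^ 4 * exp 0.625"
    by (simp add: exp_add[symmetric] exp_of_nat_mult[symmetric])
  have "(\<Sum>n<3. (0.625::real) ^ n / fact n) \<le> exp 0.625" by (rule exp_lower_sum) simp
  moreover have "(\<Sum>n<3. (0.625::real) ^ n / fact n) \<ge> 1.8"
    by (simp add: eval_nat_numeral)
  ultimately have b: "1.8 \<le> exp (0.625::real)" by simp
  have c: "2.718 ^ 4 \<le> exp (1::real) ^ 4" using e_ge by (intro power_mono) auto
  have "(2.718::real) ^ 4 * 1.8 \<le> exp 1 ^ 4 * exp 0.625"
    using b c by (intro mult_mono) auto
  moreover have "67.5 \<le> (2.718::real) ^ 4 * 1.8" by (simp add: eval_nat_numeral)
  ultimately show ?thesis using a by linarith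
qed

lemma exp_le_lin: "0 \<le> x \<Longrightarrow> x \<le> 1/4 \<Longrightarrow> exp x \<le> 1 + 5/4 * (x::real)"
proof -
  assume a: "0 \<le> x" "x \<le> 1/4"
  have "exp x \<le> 1 + x + x\<^sup>2" using exp_bound[of x] a by simp
  moreover have "x\<^sup>2 \<le> x / 4" using a by (simp add: power2_eq_square mult_left_mono[of x "1/4" x, simplified])
  ultimately show ?thesis by simp
qed


definition Pa :: "nat \<Rightarrow> real \<Rightarrow> real" where
  "Pa n x = (\<Sum>i\<le>n. (5/4 * x) ^ i / fact i)"

lemma Pa_0[simp]: "Pa 0 x = 1" by (simp add: Pa_def)

lemma Pa_Suc: "Pa (Suc n) x = Pa n x + (5/4 * x) ^ Suc n / fact (Suc n)"
  by (simp add: Pa_def)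

lemma Pa_at0[simp]: "Pa n 0 = 1"
  by (induction n) (simp_all add: Pa_Suc)

lemma Pa_mono: "0 \<le> x \<Longrightarrow> Pa n x \<le> Pa (Suc n) x"
  by (simp add: Pa_Suc)

lemma Pa_nonneg: "0 \<le> x \<Longrightarrow> 0 \<le> Pa n x"
  unfolding Pa_def by (intro sum_nonneg) auto

lemma Pa_ge: "0 \<le> x \<Longrightarrow> 1 + 5/4 * x \<le> Pa (Suc n) x"
proof (induction n)
  case 0
  then show ?case by (simp add: Pa_Suc)
next
  case (Suc n)
  then show ?case using Pa_mono[of x "Suc n"] by linarith
qed

lemma binom_lb:
  fixes mu p :: real
  assumes "0 \<le> mu" "0 \<le> p"
  shows "mu ^ Suc n + real (Suc n) * p * mu ^ n \<le> (mu + p) ^ Suc n"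
proof (induction n)
  case 0
  then show ?case by simp
next
  case (Suc n)
  have "(mu + p) ^ Suc (Suc n) = (mu + p) * (mu + p) ^ Suc n" by simp
  also have "\<dots> \<ge> (mu + p) * (mu ^ Suc n + real (Suc n) * p * mu ^ n)"
    using Suc assms by (intro mult_left_mono) auto
  finally have h: "(mu + p) * (mu ^ Suc n + real (Suc n) * p * mu ^ n) \<le> (mu + p) ^ Suc (Suc n)" .
  have "(mu + p) * (mu ^ Suc n + real (Suc n) * p * mu ^ n) =
      mu ^ Suc (Suc n) + real (Suc (Suc n)) * p * mu ^ Suc n + real (Suc n) * p * p * mu ^ n"
    by (simp add: algebra_simps)
  moreover have "0 \<le> real (Suc n) * p * p * mu ^ n" using assms by simp
  ultimately show ?case using h by linarith
qed

lemma cancel_aux: "(c::real) > 0 \<Longrightarrow> F > 0 \<Longrightarrow> a / (c * F) * (c * b) = a * b / F"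
  by (simp add: field_simps)

lemma T_shift:
  fixes mu p :: real
  assumes "0 \<le> mu" "0 \<le> p"
  shows "(5/4 * mu) ^ Suc m / fact (Suc m) + 5/4 * p * ((5/4 * mu) ^ m / fact m)
     \<le> (5/4 * (mu + p)) ^ Suc m / fact (Suc m)"
proof -
  have f: "(fact (Suc m) :: real) = real (Suc m) * fact m" by simp
  have fp: "(0::real) < fact m" by simp
  have pm: "\<And>i. (5/4 * mu) ^ i = (5/4) ^ i * mu ^ i" by (rule power_mult_distrib)
  have e1: "(5/4 * mu) ^ Suc m / fact (Suc m) = (5/4) ^ Suc m / fact (Suc m) * mu ^ Suc m"
    unfolding pm by simp
  have e2: "5/4 * p * ((5/4 * mu) ^ m / fact m) = (5/4) ^ Suc m / fact (Suc m) * (real (Suc m) * p * mu ^ m)"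
  proof -
    have "(5/4) ^ Suc m / (real (Suc m) * fact m) * (real (Suc m) * (p * mu ^ m))
       = (5/4) ^ Suc m * (p * mu ^ m) / fact m"
      by (rule cancel_aux) auto
    also have "\<dots> = 5/4 * p * ((5/4) ^ m * mu ^ m / fact m)" by (simp add: field_simps)
    finally show ?thesis unfolding f pm by (simp add: mult.assoc)
  qed
  have "(5/4 * mu) ^ Suc m / fact (Suc m) + 5/4 * p * ((5/4 * mu) ^ m / fact m)
      = (5/4) ^ Suc m / fact (Suc m) * (mu ^ Suc m + real (Suc m) * p * mu ^ m)"
    unfolding e1 e2 by (simp add: distrib_left)
  also have "\<dots> \<le> (5/4) ^ Suc m / fact (Suc m) * (mu + p) ^ Suc m"
    using binom_lb[OF assms, of m] by (intro mult_left_mono) auto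
  also have "\<dots> = ((5/4) ^ Suc m * (mu + p) ^ Suc m) / fact (Suc m)"
    by (rule times_divide_eq_left)
  also have "\<dots> = (5/4 * (mu + p)) ^ Suc m / fact (Suc m)"
    by (simp only: power_mult_distrib)
  finally show ?thesis .
qed

lemma Pa_shift:
  fixes mu p :: real
  assumes "0 \<le> mu" "0 \<le> p"
  shows "Pa (Suc n) mu + 5/4 * p * Pa n mu \<le> Pa (Suc n) (mu + p)"
proof (induction n)
  case 0
  then show ?case by (simp add: Pa_Suc algebra_simps)
next
  case (Suc n)
  have "Pa (Suc (Suc n)) mu + 5/4 * p * Pa (Suc n) mu =
     (Pa (Suc n) mu + 5/4 * p * Pa n mu) + ((5/4 * mu) ^ Suc (Suc n) / fact (Suc (Suc n))
       + 5/4 * p * ((5/4 * mu) ^ Suc n / fact (Suc n)))"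
    by (simp only: Pa_Suc[of "Suc n"] Pa_Suc[of n] algebra_simps)
  also have "\<dots> \<le> Pa (Suc n) (mu + p) + (5/4 * (mu + p)) ^ Suc (Suc n) / fact (Suc (Suc n))"
    using Suc T_shift[OF assms, of "Suc n"] by linarith
  also have "\<dots> = Pa (Suc (Suc n)) (mu + p)" by (simp only: Pa_Suc[of "Suc n"])
  finally show ?case .
qed

definition Vind :: "int \<Rightarrow> real \<Rightarrow> real" where
  "Vind j lam = (if j < 0 then 0 else exp (- lam) * Pa (nat j) lam)"

lemma Vind_nonneg: "0 \<le> lam \<Longrightarrow> 0 \<le> Vind j lam"
  unfolding Vind_def using Pa_nonneg by auto

lemma loc_ind:
  fixes lam p :: real
  assumes l: "0 \<le> lam" and p: "0 < p" "p \<le> 1/4"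
  shows "(1 - p) * Vind j (max 0 (lam - p)) + p * Vind (j - 1) (max 0 (lam - p)) \<le> Vind j lam"
proof -
  define lam' where "lam' = max 0 (lam - p)"
  have l': "0 \<le> lam'" "lam - p \<le> lam'" unfolding lam'_def by auto
  have ex1: "(1 - p) * exp p \<le> 1"
  proof -
    have "1 - p \<le> exp (- p)" using exp_ge_add_one_self[of "-p"] by simp
    then have "(1 - p) * exp p \<le> exp (-p) * exp p" using p by (intro mult_right_mono) auto
    then show ?thesis by (simp add: exp_minus)
  qed
  show ?thesis
  proof (cases "j < 0")
    case True
    then show ?thesis unfolding Vind_def by simp
  next
    case False
    show ?thesis
    proof (cases "j = 0")
      case True
      have "exp (- lam') \<le> exp (p - lam)" using l' by simp
      then have "(1 - p) * exp (- lam') \<le> (1 - p) * exp (p - lam)" using p by (intro mult_left_mono) auto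
      also have "\<dots> = ((1 - p) * exp p) * exp (- lam)" by (simp add: exp_diff exp_minus field_simps)
      also have "\<dots> \<le> 1 * exp (- lam)" using ex1 by (intro mult_right_mono) auto
      finally show ?thesis using True unfolding Vind_def lam'_def by simp
    next
      case False
      define n where "n = nat j - 1"
      have n: "nat j = Suc n" "nat (j - 1) = n" using False \<open>\<not> j < 0\<close> unfolding n_def by auto
      have j1: "\<not> j - 1 < 0" using False \<open>\<not> j < 0\<close> by simp
      have lhs: "(1 - p) * Vind j lam' + p * Vind (j - 1) lam' =
          exp (- lam') * ((1 - p) * Pa (Suc n) lam' + p * Pa n lam')"
        unfolding Vind_def using \<open>\<not> j < 0\<close> j1 n by (simp add: algebra_simps)
      show ?thesis
      proof (cases "p \<le> lam")
        case True
        define mu where "mu = lam - p"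
        have mu: "0 \<le> mu" "lam' = mu" "lam = mu + p" unfolding mu_def lam'_def using True by auto
        define q where "q = exp p"
        define X where "X = Pa (Suc n) mu"
        define Y where "Y = Pa n mu"
        have XY: "0 \<le> Y" "Y \<le> X" unfolding X_def Y_def using Pa_nonneg Pa_mono mu by auto
        have q1: "q * (1 - p) \<le> 1" using ex1 unfolding q_def by (simp add: mult.commute)
        have q2: "q \<le> 1 + 5/4 * p" unfolding q_def using exp_le_lin p by simp
        have "(q * (1 - p) - 1) * X \<le> (q * (1 - p) - 1) * Y"
          using q1 XY by (intro mult_left_mono_neg) auto
        moreover have "(q - 1 - 5/4 * p) * Y \<le> 0" using q2 XY by (intro mult_nonpos_nonneg) auto
        ultimately have key: "q * ((1 - p) * X + p * Y) \<le> X + 5/4 * p * Y"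
          by (simp add: algebra_simps)
        have "X + 5/4 * p * Y \<le> Pa (Suc n) lam"
          unfolding X_def Y_def mu(3) using Pa_shift[OF mu(1)] p by simp
        with key have k2: "q * ((1 - p) * X + p * Y) \<le> Pa (Suc n) lam" by linarith
        have "exp (- lam') = exp (- lam) * q" unfolding q_def mu by (simp add: exp_add[symmetric])
        then have "exp (- lam') * ((1 - p) * Pa (Suc n) lam' + p * Pa n lam')
            = exp (- lam) * (q * ((1 - p) * X + p * Y))" unfolding X_def Y_def mu(2) by simp
        also have "\<dots> \<le> exp (- lam) * Pa (Suc n) lam" using k2 by (intro mult_left_mono) auto
        finally show ?thesis using lhs unfolding Vind_def lam'_def using \<open>\<not> j < 0\<close> n by simp
      next
        case False
        then have "lam' = 0" unfolding lam'_def by simp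
        then have "(1 - p) * Vind j lam' + p * Vind (j - 1) lam' = 1" using lhs by simp
        moreover have "1 \<le> Vind j lam"
        proof -
          have "exp lam \<le> 1 + 5/4 * lam" using exp_le_lin l False p by simp
          also have "\<dots> \<le> Pa (Suc n) lam" using Pa_ge l by simp
          finally have "exp lam \<le> Pa (Suc n) lam" .
          then have "exp (- lam) * exp lam \<le> exp (- lam) * Pa (Suc n) lam" by (intro mult_left_mono) auto
          then show ?thesis unfolding Vind_def using \<open>\<not> j < 0\<close> n by (simp add: exp_minus)
        qed
        ultimately show ?thesis unfolding lam'_def by simp
      qed
    qed
  qed
qed

lemma loc_mgf:
  fixes lam p :: real
  assumes l: "0 \<le> lam" and p: "0 < p" "p \<le> 1/4"
  shows "(1 - p) * ((1/2) ^ c * exp (- max 0 (lam - p) / 2)) + p * ((1/2) ^ Suc c * exp (- max 0 (lam - p) / 2))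
     \<le> (1/2) ^ c * exp (- lam / 2)"
proof -
  define lam' where "lam' = max 0 (lam - p)"
  have l': "lam - p \<le> lam'" unfolding lam'_def by auto
  have "(1 - p) * ((1/2) ^ c * exp (- lam' / 2)) + p * ((1/2) ^ Suc c * exp (- lam' / 2))
      = (1/2) ^ c * exp (- lam' / 2) * (1 + (- p / 2))" by (simp add: algebra_simps)
  also have "\<dots> \<le> (1/2) ^ c * exp (- lam' / 2) * exp (- p / 2)"
    by (intro mult_left_mono) (auto simp: exp_ge_add_one_self[of "- p / 2", simplified])
  also have "\<dots> = (1/2) ^ c * exp (- (lam' + p) / 2)" by (simp add: exp_add[symmetric] field_simps)
  also have "\<dots> \<le> (1/2) ^ c * exp (- lam / 2)" using l' by (intro mult_left_mono) auto
  finally show ?thesis unfolding lam'_def .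
qed


lemma prob_bound:
  fixes X :: "'a pmf"
  assumes "\<And>y. y \<in> set_pmf X \<Longrightarrow> y \<in> B \<Longrightarrow> 1 \<le> g y" "\<And>y. 0 \<le> g y"
    and "(\<integral>\<^sup>+y. ennreal (g y) \<partial>X) \<le> ennreal c" "0 \<le> c"
  shows "measure_pmf.prob X B \<le> c"
proof -
  have "emeasure (measure_pmf X) B = (\<integral>\<^sup>+y. indicator B y \<partial>X)" by simp
  also have "\<dots> \<le> (\<integral>\<^sup>+y. ennreal (g y) \<partial>X)"
    using assms(1,2) by (intro nn_integral_mono_AE) (auto simp: AE_measure_pmf_iff indicator_def)
  also have "\<dots> \<le> ennreal c" by (rule assms(3))
  finally have "ennreal (measure_pmf.prob X B) \<le> ennreal c"
    by (simp add: measure_pmf.emeasure_eq_measure)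
  then show ?thesis using assms(4) by (simp add: ennreal_le_iff)
qed

lemma mgf_bound:
  assumes k: "k \<ge> 1" and e: "eps > 0" and n0: "4 * (sqrt (real k) / eps) \<le> real n0"
    and w: "W k eps n0 s" "ntot s + m = 2 * n0" and l: "0 \<le> lam" "lam \<le> Lam k eps n0 s"
  shows "(\<integral>\<^sup>+x. ennreal ((1/2) ^ (fst (snd x))) \<partial>exec2 k eps m s) \<le> ennreal (exp (- lam / 2))"
proof -
  have "(\<integral>\<^sup>+x. ennreal ((1/2) ^ (fst (snd x) + 0)) \<partial>exec2 k eps m s) \<le> ennreal ((1/2) ^ 0 * exp (- lam / 2))"
    by (rule pot_bound[where G = "\<lambda>c r. (1/2) ^ (r + c)" and V = "\<lambda>c lam. (1/2) ^ c * exp (- lam / 2)"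
        and sh = Suc, OF _ _ loc_mgf _ k e n0 w l]) auto
  then show ?thesis by simp
qed

lemma ind_bound:
  assumes k: "k \<ge> 1" and e: "eps > 0" and n0: "4 * (sqrt (real k) / eps) \<le> real n0"
    and w: "W k eps n0 s" "ntot s + m = 2 * n0" and l: "0 \<le> lam" "lam \<le> Lam k eps n0 s"
  shows "(\<integral>\<^sup>+x. ennreal (if int (fst (snd x)) \<le> j then 1 else 0) \<partial>exec2 k eps m s) \<le> ennreal (Vind j lam)"
  by (rule pot_bound[where G = "\<lambda>j r. if int r \<le> j then 1 else 0" and V = Vind
        and sh = "\<lambda>j. j - 1", OF _ _ loc_ind _ k e n0 w l])
     (auto simp: Vind_def Pa_nonneg)

lemma ntot_lt_srv:
  assumes "Inv k eps s" "0 < ntot s"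
  shows "ntot s < 2 * srv_sum s"
proof -
  have h: "ntot s = (\<Sum>i<k. nloc s i)" "srv_sum s = (\<Sum>i<k. srv_n s i)"
    "\<forall>i. srv_n s i \<le> nloc s i \<and> (nloc s i = 0 \<longrightarrow> srv_n s i = 0) \<and>
          (0 < nloc s i \<longrightarrow> is_pow2 (srv_n s i) \<and> nloc s i < 2 * srv_n s i)"
    using assms(1) unfolding Inv_def Inv0_def by blast+
  obtain i where i: "i < k" "0 < nloc s i" using assms(2) h(1)
    by (metis lessThan_iff gr0I sum_eq_0_iff finite_lessThan)
  have "(\<Sum>i<k. nloc s i) < (\<Sum>i<k. 2 * srv_n s i)"
  proof (rule sum_strict_mono_ex1)
    show "\<forall>x\<in>{..<k}. nloc s x \<le> 2 * srv_n s x"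
      using h(3) by (metis less_imp_le_nat mult_2 trans_le_add1 bot_nat_0.not_eq_extremum le_add2)
    show "\<exists>a\<in>{..<k}. nloc s a < 2 * srv_n s a" using i h(3) by auto
  qed simp
  then show ?thesis using h by (simp add: sum_distrib_left)
qed


theorem mainTheorem2:
  fixes k :: nat and eps :: real and n0 :: nat and s :: st
  assumes "k \<ge> 1" and "eps > 0" and "eps * sqrt (real k) < 1"
    and "real n0 \<ge> 4 * sqrt (real k) / eps"
    and "s \<in> set_pmf (run k eps n0 init_st)" and "round_start s"
  shows "measure_pmf.prob (exec k eps n0 s) {x. real (card (fst x)) > real k / 8}
           \<ge> 1 - exp (- sqrt (real k) / (32 * eps))"
proof -
  define S where "S = sqrt (real k) / eps"
  have k1: "k \<ge> 1" and e: "eps > 0" using assms by auto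
  have sk: "0 < sqrt (real k)" using k1 by simp
  have Sp: "0 < S" unfolding S_def using sk e by simp
  have kS: "real k < S"
  proof -
    have "real k * eps = sqrt (real k) * (eps * sqrt (real k))"
      by (simp add: algebra_simps)
    also have "\<dots> < sqrt (real k) * 1" using assms(3) sk by (intro mult_strict_left_mono) auto
    finally show ?thesis unfolding S_def using e by (simp add: pos_less_divide_eq)
  qed
  have n0: "4 * (sqrt (real k) / eps) \<le> real n0" using assms(4) by simp
  have n0S: "4 * S \<le> real n0" using n0 unfolding S_def .
  obtain y where y: "y \<in> set_pmf (exec2 k eps n0 init_st)" and sy: "s = snd (snd y)"
    using assms(5) unfolding run_def exec_exec2 by (auto simp: split_beta)
  have reach: "Inv k eps s" "ntot s = n0"
    using exec2_reach[OF Inv_init[OF k1] k1 y] sy by (auto simp: init_st_def)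
  have rs: "pp s = newp k eps (srv_sum s)" "tau s = srv_sum s" "pp s < 1 \<longrightarrow> Cst s"
    using reach(1) assms(6) unfolding Inv_def Inv0_def by auto
  have n0p: "0 < n0" using n0S Sp by simp
  have t1: "n0 < 2 * tau s" using ntot_lt_srv[OF reach(1)] reach(2) n0p rs(2) by simp
  have t2: "tau s \<le> n0" using Inv_srv_le[OF reach(1)] reach(2) rs(2) by simp
  have t3: "real (tau s) > 2 * (sqrt (real k) / eps)"
  proof -
    have "real n0 < 2 * real (tau s)" using t1 by linarith
    then show ?thesis using n0 by linarith
  qed
  have ppe: "pp s = newp k eps (tau s)" using rs by simp
  have "pp s < 1" using newp_bounds(2)[OF k1 e t3] ppe by simp
  then have Cs: "Cst s" using rs by simp
  have W0: "W k eps n0 s" unfolding W_def using reach t1 ppe Cs by simp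
  have wm: "ntot s + n0 = 2 * n0" using reach by simp
  have Lam0: "Lam k eps n0 s = S / 2"
    unfolding Lam_def S_def[symmetric] using phi_init[OF t1 t2] reach(2) by simp
  define X where "X = exec2 k eps n0 s"
  have U2: "U k n0 s \<le> 2" unfolding U_def by simp
  have ask: "adv_site s < k" using reach(1) unfolding Inv_def Inv0_def by simp
  have key: "finite (fst z) \<and> (fst (snd z) = 0 \<longleftrightarrow> fst z = {}) \<and>
      (\<exists>d'. min d' k \<le> card (fst z) \<and> fst (snd z) \<le> d' + 2)" if z: "z \<in> set_pmf X" for z
  proof -
    obtain R r s' where zz: "z = (R, r, s')" by (cases z) auto
    have r1: "R \<subseteq> {..<k}" "(r = 0 \<longleftrightarrow> R = {})"
      using exec2_reach[OF reach(1) k1, of z n0] z zz unfolding X_def by auto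
    have fin: "finite R" using r1(1) finite_subset by blast
    have i0: "img k (adv_site s) 0 \<subseteq> {}" unfolding img_def by simp
    have a0: "adv_site s = (adv_site s + 0) mod k" using ask by simp
    obtain d' where d': "img k (adv_site s) d' \<subseteq> {} \<union> R" "0 + r \<le> d' + U k n0 s"
      using card_part[OF k1 e n0 W0 wm i0 a0, of R r s'] z zz unfolding X_def by blast
    have "card (img k (adv_site s) (min d' k)) = min d' k" by (rule card_img) simp
    moreover have "card (img k (adv_site s) (min d' k)) \<le> card R"
      using d'(1) img_mono[of "min d' k" d' k "adv_site s"] fin by (intro card_mono) auto
    ultimately show ?thesis using zz fin r1 d'(2) U2 by auto
  qed
  define bad where "bad = {z :: nat set \<times> nat \<times> st. \<not> real (card (fst z)) > real k / 8}"
  have badb: "measure_pmf.prob X bad \<le> exp (- S / 32)"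
  proof (cases "k < 8")
    case True
    have "measure_pmf.prob X bad \<le> exp (- (S / 2) / 2)"
    proof (rule prob_bound[where g = "\<lambda>z. (1/2) ^ (fst (snd z))"])
      fix z assume z: "z \<in> set_pmf X" "z \<in> bad"
      then have "real (card (fst z)) < 1" unfolding bad_def using True by auto
      then have "card (fst z) = 0" by simp
      then have "fst (snd z) = 0" using key[OF z(1)] by auto
      then show "1 \<le> (1/2::real) ^ (fst (snd z))" by simp
    next
      show "(\<integral>\<^sup>+z. ennreal ((1/2) ^ (fst (snd z))) \<partial>X) \<le> ennreal (exp (- (S / 2) / 2))"
        unfolding X_def using mgf_bound[OF k1 e n0 W0 wm, of "S/2"] Lam0 Sp by simp
    qed auto
    also have "\<dots> \<le> exp (- S / 32)" using Sp by simp
    finally show ?thesis .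
  next
    case False
    then have k8: "8 \<le> k" by simp
    show ?thesis
    proof (cases "12 \<le> S")
      case True
      define T where "T = real k / 8 + 2"
      have "measure_pmf.prob X bad \<le> 2 powr T * exp (- (S / 2) / 2)"
      proof (rule prob_bound[where g = "\<lambda>z. 2 powr T * (1/2) ^ (fst (snd z))"])
        fix z assume z: "z \<in> set_pmf X" "z \<in> bad"
        obtain d' where d': "min d' k \<le> card (fst z)" "fst (snd z) \<le> d' + 2" using key[OF z(1)] by blast
        have c: "real (card (fst z)) \<le> real k / 8" using z(2) unfolding bad_def by auto
        have "real (min d' k) \<le> real k / 8" using d'(1) c by linarith
        moreover have "real k / 8 < real k" using k8 by simp
        ultimately have "min d' k \<noteq> k" by auto
        then have "min d' k = d'" by (simp add: min_def split: if_splits)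
        then have "real (fst (snd z)) \<le> T"
          using d'(2) \<open>real (min d' k) \<le> real k / 8\<close> unfolding T_def by linarith
        then have "2 powr real (fst (snd z)) \<le> 2 powr T" by simp
        moreover have "(1/2::real) ^ (fst (snd z)) = 1 / 2 powr real (fst (snd z))"
          by (simp add: powr_realpow power_one_over)
        moreover have "0 < 2 powr real (fst (snd z))" by simp
        ultimately show "1 \<le> 2 powr T * (1/2::real) ^ (fst (snd z))" by (simp add: field_simps)
      next
        have "(\<integral>\<^sup>+z. ennreal (2 powr T * (1/2) ^ (fst (snd z))) \<partial>X)
            = ennreal (2 powr T) * (\<integral>\<^sup>+z. ennreal ((1/2) ^ (fst (snd z))) \<partial>X)"
          by (simp add: ennreal_mult nn_integral_cmult)
        also have "\<dots> \<le> ennreal (2 powr T) * ennreal (exp (- (S / 2) / 2))"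
          unfolding X_def using mgf_bound[OF k1 e n0 W0 wm, of "S/2"] Lam0 Sp
          by (intro mult_left_mono) auto
        also have "\<dots> = ennreal (2 powr T * exp (- (S / 2) / 2))" by (simp add: ennreal_mult)
        finally show "(\<integral>\<^sup>+z. ennreal (2 powr T * (1/2) ^ (fst (snd z))) \<partial>X)
            \<le> ennreal (2 powr T * exp (- (S / 2) / 2))" .
      qed auto
      also have "\<dots> \<le> exp (- S / 32)"
      proof -
        have "2 powr T = exp (T * ln 2)" by (simp add: powr_def)
        also have "\<dots> \<le> exp (T * (3/4))"
          using ln2_le unfolding T_def by (intro exp_mono mult_left_mono) auto
        finally have "2 powr T * exp (- (S / 2) / 2) \<le> exp (T * (3/4)) * exp (- (S / 2) / 2)"
          by (intro mult_right_mono) auto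
        also have "\<dots> = exp (T * (3/4) - S / 4)"
        proof -
          have eq: "T * (3/4) - S / 4 = T * (3/4) + (- (S / 2) / 2)" by simp
          show ?thesis unfolding eq by (simp only: exp_add)
        qed
        also have "\<dots> \<le> exp (- S / 32)"
        proof -
          have "T * (3/4) = 3 * real k / 32 + 3/2" unfolding T_def by (simp add: algebra_simps)
          then have "T * (3/4) - S / 4 \<le> - S / 32" using True kS by linarith
          then show ?thesis by simp
        qed
        finally show ?thesis .
      qed
      finally show ?thesis .
    next
      case False
      then have S12: "S < 12" by simp
      have k12: "real k < 12" using kS S12 by linarith
      have r3: "int (fst (snd z)) \<le> 3" if z: "z \<in> set_pmf X" "z \<in> bad" for z
      proof -
        obtain d' where d': "min d' k \<le> card (fst z)" "fst (snd z) \<le> d' + 2" using key[OF z(1)] by blast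
        have c: "real (card (fst z)) \<le> real k / 8" using z(2) unfolding bad_def by auto
        then have "real (card (fst z)) < 2" using k12 by linarith
        then have "card (fst z) \<le> 1" by simp
        then have "d' \<le> 1" using d'(1) k8 by (simp add: min_def split: if_splits)
        then show ?thesis using d'(2) by simp
      qed
      have gen: "measure_pmf.prob X bad \<le> Vind 3 lam" if l: "0 \<le> lam" "lam \<le> S / 2" for lam
      proof (rule prob_bound[where g = "\<lambda>z. if int (fst (snd z)) \<le> 3 then 1 else 0"])
        show "(\<integral>\<^sup>+z. ennreal (if int (fst (snd z)) \<le> 3 then 1 else 0) \<partial>X) \<le> ennreal (Vind 3 lam)"
          unfolding X_def using ind_bound[OF k1 e n0 W0 wm, of lam 3] l Lam0 by simp
        show "0 \<le> Vind 3 lam" using Vind_nonneg l by simp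
      qed (use r3 in auto)
      have P34: "Pa 3 4 = 118/3" by (simp add: Pa_def eval_nat_numeral)
      have P35: "Pa 3 5 \<le> 67.5" by (simp add: Pa_def eval_nat_numeral)
      show ?thesis
      proof (cases "S < 10")
        case True
        have "measure_pmf.prob X bad \<le> Vind 3 4" using gen[of 4] kS k8 by simp
        also have "\<dots> = exp (- 4) * (118/3)" unfolding Vind_def using P34 by simp
        also have "\<dots> \<le> exp (- 4) * exp 3.6875" using num1 by (intro mult_left_mono) auto
        also have "\<dots> = exp (- 0.3125)" by (simp add: exp_add[symmetric])
        also have "\<dots> \<le> exp (- S / 32)" using True by simp
        finally show ?thesis .
      next
        case False
        have "measure_pmf.prob X bad \<le> Vind 3 5" using gen[of 5] False by simp
        also have "\<dots> = exp (- 5) * Pa 3 5" unfolding Vind_def by simp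
        also have "\<dots> \<le> exp (- 5) * exp 4.625" using num2 P35 by (intro mult_left_mono) auto
        also have "\<dots> = exp (- 0.375)" by (simp add: exp_add[symmetric])
        also have "\<dots> \<le> exp (- S / 32)" using S12 by simp
        finally show ?thesis .
      qed
    qed
  qed
  have eqp: "measure_pmf.prob (exec k eps n0 s) {x. real (card (fst x)) > real k / 8}
      = measure_pmf.prob X (UNIV - bad)"
  proof -
    have "UNIV - bad = {z. real (card (fst z)) > real k / 8}" unfolding bad_def by auto
    then show ?thesis unfolding exec_exec2 X_def by (simp add: vimage_def split_beta)
  qed
  also have "\<dots> = 1 - measure_pmf.prob X bad"
    using measure_pmf.prob_compl[of bad X] by simp
  finally have "measure_pmf.prob (exec k eps n0 s) {x. real (card (fst x)) > real k / 8}
      = 1 - measure_pmf.prob X bad" .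
  moreover have "- sqrt (real k) / (32 * eps) = - S / 32" unfolding S_def by simp
  then have "exp (- sqrt (real k) / (32 * eps)) = exp (- S / 32)" by (rule arg_cong)
  ultimately show ?thesis using badb by linarith
qed


end
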